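(* Let $\eta\in C^1_c(\mathbb R^n)$ with $\eta=1$ on $B_1$, $\eta=0$ on $\mathbb R^n\setminus B_2$, $0\le\eta\le1$ and $\|\nabla\eta\|_\infty\le2$, and for $k\in\mathbb N$ let $\eta_k(x)=\eta(x/k)$. Let $p\in(1,\infty)$, $s\in(0,1)$, $u\in L^p(\mathbb R^n)$ and $u_k=\eta_ku$. Then $$J^1_{s,p}(u_k)\le C(n,p)\left(J^1_{s,p}(u)+\|u\|_p^p\right),$$ where $C(n,p)>0$ is independent of $k$.
   Context: Let $e_1=(1,0,\dots,0)$ and $J^1_{s,p}(u)=s(1-s)\int_{\mathbb R^n}\int_{\mathbb R}\frac{|u(x+he_1)-u(x)|^p}{|h|^{1+sp}}dh\,dx\in[0,\infty]$. $B_r$ denotes the open ball of radius $r$ centered at the origin. *)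

theory Defs
  imports "HOL-Analysis.Analysis"
begin

text \<open>Directional fractional Gagliardo-type energy along the unit vector e
  (in the paper e = e_1):
  J(u) = s(1-s) \<integral>_{R^n} \<integral>_R |u(x+he)-u(x)|^p / |h|^{1+sp} dh dx, valued in [0,\<infinity>].\<close>
definition J1 :: "'a::euclidean_space \<Rightarrow> real \<Rightarrow> real \<Rightarrow> ('a \<Rightarrow> real) \<Rightarrow> ennreal" where
  "J1 e s p u = ennreal (s * (1 - s)) *
     (\<integral>\<^sup>+ x. (\<integral>\<^sup>+ h. ennreal (\<bar>u (x + h *\<^sub>R e) - u x\<bar> powr p / \<bar>h\<bar> powr (1 + s * p))
        \<partial>(lebesgue :: real measure)) \<partial>lebesgue)"

definition Lp_pow :: "real \<Rightarrow> ('a::euclidean_space \<Rightarrow> real) \<Rightarrow> ennreal" where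
  "Lp_pow p u = (\<integral>\<^sup>+ x. ennreal (\<bar>u x\<bar> powr p) \<partial>lebesgue)"

end

theory Submission imports Defs begin

lemma nn_integral_add_le:
  assumes f: "f \<in> borel_measurable M"
  shows "(\<integral>\<^sup>+x. f x + g x \<partial>M) \<le> (\<integral>\<^sup>+x. f x \<partial>M) + (\<integral>\<^sup>+x. g x \<partial>M)"
proof -
  have "integral\<^sup>S M s \<le> (\<integral>\<^sup>+x. f x \<partial>M) + (\<integral>\<^sup>+x. g x \<partial>M)"
    if s: "simple_function M s" "s \<le> (\<lambda>x. f x + g x)" for s
  proof -
    have sm: "s \<in> borel_measurable M" using s(1) by (rule borel_measurable_simple_function)
    have eqS: "integral\<^sup>S M s = (\<integral>\<^sup>+x. s x \<partial>M)" using s(1) by (simp add: nn_integral_eq_simple_integral)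
    define h where "h x = (if f x = top then 0 else s x - f x)" for x
    have hm: "h \<in> borel_measurable M" unfolding h_def using f sm by measurable
    have "s x \<le> f x + h x" for x
    proof (cases "f x \<le> s x")
      case True then show ?thesis unfolding h_def
        using ennreal_ineq_diff_add[OF True] by (auto simp: top_unique)
    next
      case False then show ?thesis
        by (metis add_increasing2 h_def le_cases zero_le)
    qed
    then have "(\<integral>\<^sup>+x. s x \<partial>M) \<le> (\<integral>\<^sup>+x. f x + h x \<partial>M)"
      by (intro nn_integral_mono) auto
    also have "\<dots> = (\<integral>\<^sup>+x. f x \<partial>M) + (\<integral>\<^sup>+x. h x \<partial>M)"
      using f hm by (intro nn_integral_add) auto
    also have "\<dots> \<le> (\<integral>\<^sup>+x. f x \<partial>M) + (\<integral>\<^sup>+x. g x \<partial>M)"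
    proof (intro add_left_mono nn_integral_mono)
      fix x have "s x \<le> f x + g x" using s(2) by (simp add: le_fun_def)
      then show "h x \<le> g x"
        unfolding h_def by (auto simp: ennreal_minus_le_iff add.commute)
    qed
    finally show ?thesis using eqS by simp
  qed
  then show ?thesis
    by (subst nn_integral_def) (auto intro!: SUP_least)
qed

lemma nn_integral_cmult_le:
  assumes r: "r > 0"
  shows "(\<integral>\<^sup>+x. ennreal r * f x \<partial>M) \<le> ennreal r * (\<integral>\<^sup>+x. f x \<partial>M)"
proof -
  have "integral\<^sup>S M s \<le> ennreal r * (\<integral>\<^sup>+x. f x \<partial>M)"
    if s: "simple_function M s" "s \<le> (\<lambda>x. ennreal r * f x)" for s
  proof -
    have sm: "(\<lambda>x. s x * ennreal (1/r)) \<in> borel_measurable M"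
      using borel_measurable_simple_function[OF s(1)] by auto
    have inv: "ennreal r * ennreal (1/r) = 1" using r
      by (simp flip: ennreal_mult)
    have "integral\<^sup>S M s = (\<integral>\<^sup>+x. s x \<partial>M)" using s(1) by (simp add: nn_integral_eq_simple_integral)
    also have "\<dots> = (\<integral>\<^sup>+x. ennreal r * (s x * ennreal (1/r)) \<partial>M)"
      using inv by (simp add: mult.assoc[symmetric] mult.commute)
    also have "\<dots> = ennreal r * (\<integral>\<^sup>+x. s x * ennreal (1/r) \<partial>M)"
      using sm by (rule nn_integral_cmult)
    also have "\<dots> \<le> ennreal r * (\<integral>\<^sup>+x. f x \<partial>M)"
    proof (intro mult_left_mono nn_integral_mono)
      fix x have "s x \<le> ennreal r * f x" using s(2) by (simp add: le_fun_def)
      then have "s x * ennreal (1/r) \<le> ennreal r * f x * ennreal (1/r)" by (rule mult_right_mono) simp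
      also have "\<dots> = f x * (ennreal r * ennreal (1/r))" by (simp add: ac_simps)
      also have "\<dots> = f x" using inv by simp
      finally show "s x * ennreal (1/r) \<le> f x" .
    qed simp
    finally show ?thesis .
  qed
  then show ?thesis
    by (subst nn_integral_def) (auto intro!: SUP_least)
qed


lemma G_int:
  fixes s p :: real
  assumes s: "0 < s" "s < 1" and p: "1 < p"
  shows "(\<integral>\<^sup>+h. ennreal ((min 1 \<bar>h\<bar>) powr p / \<bar>h\<bar> powr (1+s*p)) \<partial>(lebesgue::real measure))
           \<le> ennreal (2 / (p * s * (1 - s)))"
proof -
  define a where "a = p*(1-s) - 1"
  define e where "e = -1 - s*p"
  have a1: "a > -1" unfolding a_def using s p by (simp add: mult_pos_pos)
  have e1: "e < -1" unfolding e_def using s p by (simp add: mult_pos_pos)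
  define Q where "Q h = ennreal (h powr a) * indicator {0..1} h + ennreal (h powr e) * indicator {1..} h" for h :: real
  have Qm[measurable]: "Q \<in> borel_measurable borel" unfolding Q_def by measurable
  have pt: "ennreal ((min 1 \<bar>h\<bar>) powr p / \<bar>h\<bar> powr (1+s*p)) \<le> Q h + Q (-h)" for h :: real
  proof -
    have QA: "ennreal ((min 1 \<bar>h\<bar>) powr p / \<bar>h\<bar> powr (1+s*p)) \<le> Q \<bar>h\<bar>"
    proof (cases "h = 0")
      case True then show ?thesis by simp
    next
      case False
      then have hp: "\<bar>h\<bar> > 0" by simp
      show ?thesis
      proof (cases "\<bar>h\<bar> \<le> 1")
        case True
        have "(min 1 \<bar>h\<bar>) powr p / \<bar>h\<bar> powr (1+s*p) = \<bar>h\<bar> powr a"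
          using True hp unfolding a_def by (simp add: powr_diff[symmetric] algebra_simps)
        then show ?thesis using True unfolding Q_def by (simp add: indicator_def)
      next
        case False
        have "(min 1 \<bar>h\<bar>) powr p / \<bar>h\<bar> powr (1+s*p) = \<bar>h\<bar> powr e"
          using False hp unfolding e_def by (simp add: powr_minus_divide[symmetric] powr_minus)
        then show ?thesis using False unfolding Q_def by (simp add: indicator_def)
      qed
    qed
    also have "Q \<bar>h\<bar> \<le> Q h + Q (-h)"
      by (cases "h \<ge> 0") (auto simp: Q_def indicator_def)
    finally show ?thesis .
  qed
  have i1: "(\<integral>\<^sup>+h. ennreal (h powr a) * indicator {0..1} h \<partial>lborel) = ennreal (1/(a+1))"
    using nn_integral_has_integral_lebesgue'[OF _ has_integral_powr_from_0[OF a1, of 1]] by simp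
  have i2: "(\<integral>\<^sup>+h. ennreal (h powr e) * indicator {1..} h \<partial>lborel) = ennreal (-1/(e+1))"
    using nn_integral_has_integral_lebesgue'[OF _ has_integral_powr_to_inf[OF e1, of 1]] by simp
  have n1: "1/(a+1) \<ge> 0" using a1 by simp
  have n2: "-1/(e+1) \<ge> 0" using e1 by (simp add: divide_nonneg_neg)
  have IQ: "(\<integral>\<^sup>+h. Q h \<partial>lborel) = ennreal (1/(a+1) + -1/(e+1))"
  proof -
    have "(\<integral>\<^sup>+h. Q h \<partial>lborel) = (\<integral>\<^sup>+h. ennreal (h powr a) * indicator {0..1} h \<partial>lborel)
       + (\<integral>\<^sup>+h. ennreal (h powr e) * indicator {1..} h \<partial>lborel)"
      unfolding Q_def by (rule nn_integral_add) auto
    also have "\<dots> = ennreal (1/(a+1)) + ennreal (-1/(e+1))" by (simp only: i1 i2)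
    also have "\<dots> = ennreal (1/(a+1) + -1/(e+1))" by (rule ennreal_plus[OF n1 n2, symmetric])
    finally show ?thesis .
  qed
  have IQ': "(\<integral>\<^sup>+h. Q (-h) \<partial>lborel) = (\<integral>\<^sup>+h. Q h \<partial>lborel)"
  proof -
    have "(\<integral>\<^sup>+h. Q h \<partial>lborel) = (\<integral>\<^sup>+h. Q h \<partial>(distr lborel borel uminus))"
      by (simp add: lborel_distr_uminus)
    also have "\<dots> = (\<integral>\<^sup>+h. Q (-h) \<partial>lborel)"
      by (rule nn_integral_distr) auto
    finally show ?thesis by simp
  qed
  have "(\<integral>\<^sup>+h. ennreal ((min 1 \<bar>h\<bar>) powr p / \<bar>h\<bar> powr (1+s*p)) \<partial>(lebesgue::real measure))
      = (\<integral>\<^sup>+h. ennreal ((min 1 \<bar>h\<bar>) powr p / \<bar>h\<bar> powr (1+s*p)) \<partial>lborel)"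
    by (simp add: nn_integral_completion)
  also have "\<dots> \<le> (\<integral>\<^sup>+h. Q h + Q (-h) \<partial>lborel)"
    by (intro nn_integral_mono pt)
  also have "\<dots> = (\<integral>\<^sup>+h. Q h \<partial>lborel) + (\<integral>\<^sup>+h. Q (-h) \<partial>lborel)"
    by (intro nn_integral_add) auto
  also have "\<dots> = ennreal (1/(a+1) + -1/(e+1)) + ennreal (1/(a+1) + -1/(e+1))"
    by (simp only: IQ' IQ)
  also have "\<dots> = ennreal (2 * (1/(a+1) + -1/(e+1)))"
    using n1 n2 by (subst ennreal_plus[symmetric]) (simp_all only: mult_2 add_nonneg_nonneg)
  also have "2 * (1/(a+1) + -1/(e+1)) = 2 / (p * s * (1 - s))"
    unfolding a_def e_def using s p by (simp add: field_simps)
  finally show ?thesis by simp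
qed


lemma pow_sum_le:
  fixes a b p :: real
  assumes "0 \<le> a" "0 \<le> b" "0 < p"
  shows "(a+b) powr p \<le> 2 powr p * (a powr p + b powr p)"
proof -
  have "(a+b) powr p \<le> (2 * max a b) powr p"
    using assms by (intro powr_mono2) auto
  also have "\<dots> = 2 powr p * (max a b) powr p"
    using assms by (simp add: powr_mult)
  also have "(max a b) powr p \<le> a powr p + b powr p"
    by (cases "a \<le> b") (auto simp: max_def)
  finally show ?thesis by simp
qed

lemma eta_lip:
  fixes \<eta> :: "'a::euclidean_space \<Rightarrow> real"
  assumes d: "\<forall>x. (\<eta> has_derivative (\<lambda>h. \<eta>' x \<bullet> h)) (at x)"
    and b: "\<forall>x. norm (\<eta>' x) \<le> 2"
  shows "\<bar>\<eta> y - \<eta> z\<bar> \<le> 2 * norm (y - z)"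
proof -
  have "norm (\<eta> y - \<eta> z) \<le> 2 * norm (y - z)"
  proof (rule differentiable_bound[where S=UNIV and f'="\<lambda>x h. \<eta>' x \<bullet> h"])
    fix x :: 'a
    show "(\<eta> has_derivative (\<lambda>h. \<eta>' x \<bullet> h)) (at x within UNIV)" using d by simp
    have "onorm (\<lambda>h. \<eta>' x \<bullet> h) \<le> norm (\<eta>' x) * onorm (\<lambda>h::'a. h)"
      using onorm_inner_right[of "\<lambda>h::'a. h" "\<eta>' x"] by simp
    then show "onorm (\<lambda>h. \<eta>' x \<bullet> h) \<le> 2" using b[rule_format, of x] by (simp add: onorm_id)
  qed auto
  then show ?thesis by simp
qed

lemma pt_main:
  fixes \<eta> :: "'a::euclidean_space \<Rightarrow> real" and u :: "'a \<Rightarrow> real"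
  assumes d: "\<forall>x. (\<eta> has_derivative (\<lambda>h. \<eta>' x \<bullet> h)) (at x)"
    and b: "\<forall>x. norm (\<eta>' x) \<le> 2"
    and r: "\<forall>x. 0 \<le> \<eta> x \<and> \<eta> x \<le> 1"
    and k: "1 \<le> k" and e: "e \<in> Basis" and p: "1 < p"
  shows "\<bar>\<eta> ((1 / real k) *\<^sub>R (x + h *\<^sub>R e)) * u (x + h *\<^sub>R e) - \<eta> ((1 / real k) *\<^sub>R x) * u x\<bar> powr p
           / \<bar>h\<bar> powr (1 + s * p)
        \<le> 4 powr p * (\<bar>u (x + h *\<^sub>R e) - u x\<bar> powr p / \<bar>h\<bar> powr (1 + s * p))
          + 4 powr p * \<bar>u x\<bar> powr p * ((min 1 \<bar>h\<bar>) powr p / \<bar>h\<bar> powr (1 + s * p))"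
proof -
  define y where "y = (1 / real k) *\<^sub>R (x + h *\<^sub>R e)"
  define z where "z = (1 / real k) *\<^sub>R x"
  define A where "A = \<bar>u (x + h *\<^sub>R e) - u x\<bar>"
  define B where "B = \<bar>u x\<bar>"
  define m where "m = min 1 \<bar>h\<bar>"
  have ne: "norm e = 1" using e by simp
  have yz: "norm (y - z) \<le> \<bar>h\<bar>"
  proof -
    have "y - z = (1 / real k) *\<^sub>R (h *\<^sub>R e)" unfolding y_def z_def by (simp add: algebra_simps)
    then have "norm (y - z) = \<bar>h\<bar> / real k" using ne k by simp
    also have "\<dots> \<le> \<bar>h\<bar>" using k by (simp add: divide_le_eq mult_le_cancel_left1)
    finally show ?thesis .
  qed
  have e1: "\<bar>\<eta> y - \<eta> z\<bar> \<le> 1" using r[rule_format, of y] r[rule_format, of z] by auto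
  have e2: "\<bar>\<eta> y - \<eta> z\<bar> \<le> 2 * \<bar>h\<bar>" using eta_lip[OF d b, of y z] yz by linarith
  have em: "\<bar>\<eta> y - \<eta> z\<bar> \<le> 2 * m" unfolding m_def using e1 e2 by (auto simp: min_def)
  have "\<eta> y * u (x + h *\<^sub>R e) - \<eta> z * u x = \<eta> y * (u (x + h *\<^sub>R e) - u x) + (\<eta> y - \<eta> z) * u x"
    by (simp add: algebra_simps)
  then have D: "\<bar>\<eta> y * u (x + h *\<^sub>R e) - \<eta> z * u x\<bar> \<le> A + (2 * m) * B"
  proof -
    assume eq: "\<eta> y * u (x + h *\<^sub>R e) - \<eta> z * u x = \<eta> y * (u (x + h *\<^sub>R e) - u x) + (\<eta> y - \<eta> z) * u x"
    have "\<bar>\<eta> y * (u (x + h *\<^sub>R e) - u x)\<bar> \<le> A"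
      unfolding A_def abs_mult using r[rule_format, of y] by (intro mult_left_le_one_le) auto
    moreover have "\<bar>(\<eta> y - \<eta> z) * u x\<bar> \<le> (2 * m) * B"
      unfolding B_def abs_mult using em by (intro mult_right_mono) auto
    ultimately show ?thesis unfolding eq by (meson abs_triangle_ineq add_mono order_trans)
  qed
  have A0: "A \<ge> 0" and B0: "B \<ge> 0" and m0: "m \<ge> 0" unfolding A_def B_def m_def by auto
  have "\<bar>\<eta> y * u (x + h *\<^sub>R e) - \<eta> z * u x\<bar> powr p \<le> (A + (2 * m) * B) powr p"
    using D p by (intro powr_mono2) auto
  also have "\<dots> \<le> 2 powr p * (A powr p + ((2 * m) * B) powr p)"
    using A0 B0 m0 p by (intro pow_sum_le) auto
  also have "\<dots> = 2 powr p * A powr p + (2 powr p * 2 powr p) * B powr p * m powr p"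
    using B0 m0 by (simp add: powr_mult algebra_simps)
  also have "\<dots> \<le> 4 powr p * A powr p + 4 powr p * B powr p * m powr p"
  proof -
    have "2 powr p \<le> 4 powr p" using p by (intro powr_mono2) auto
    moreover have "2 powr p * 2 powr p = 4 powr p" by (simp add: powr_mult[symmetric])
    ultimately show ?thesis
      by (intro add_mono mult_right_mono) auto
  qed
  finally have main: "\<bar>\<eta> y * u (x + h *\<^sub>R e) - \<eta> z * u x\<bar> powr p \<le> 4 powr p * A powr p + 4 powr p * B powr p * m powr p" .
  have "\<bar>\<eta> y * u (x + h *\<^sub>R e) - \<eta> z * u x\<bar> powr p / \<bar>h\<bar> powr (1 + s * p)
     \<le> (4 powr p * A powr p + 4 powr p * B powr p * m powr p) / \<bar>h\<bar> powr (1 + s * p)"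
    using main by (intro divide_right_mono) auto
  then show ?thesis unfolding y_def[symmetric] z_def[symmetric] A_def[symmetric] B_def[symmetric] m_def[symmetric]
    by (simp add: add_divide_distrib)
qed


theorem lemma2p4:
  fixes p :: real
  assumes "1 < p"
  shows "\<exists>C>0. \<forall>(\<eta> :: 'a::euclidean_space \<Rightarrow> real) (\<eta>' :: 'a \<Rightarrow> 'a) (s :: real) (u :: 'a \<Rightarrow> real) (k :: nat) (e :: 'a).
     e \<in> Basis \<longrightarrow>
     (\<forall>x. (\<eta> has_derivative (\<lambda>h. \<eta>' x \<bullet> h)) (at x)) \<longrightarrow> continuous_on UNIV \<eta>' \<longrightarrow>
     (\<forall>x\<in>ball 0 1. \<eta> x = 1) \<longrightarrow> (\<forall>x. x \<notin> ball 0 2 \<longrightarrow> \<eta> x = 0) \<longrightarrow>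
     (\<forall>x. 0 \<le> \<eta> x \<and> \<eta> x \<le> 1) \<longrightarrow> (\<forall>x. norm (\<eta>' x) \<le> 2) \<longrightarrow>
     0 < s \<longrightarrow> s < 1 \<longrightarrow>
     u \<in> borel_measurable lebesgue \<longrightarrow> Lp_pow p u < \<infinity> \<longrightarrow>
     1 \<le> k \<longrightarrow>
     J1 e s p (\<lambda>x. \<eta> ((1 / real k) *\<^sub>R x) * u x) \<le> ennreal C * (J1 e s p u + Lp_pow p u)"
proof -
  have p: "1 < p" by fact
  define K where "K = 4 powr p"
  have K0: "K > 0" unfolding K_def by simp
  show ?thesis
  proof (intro exI[of _ "2*K"] conjI allI impI)
    show "0 < 2*K" using K0 by simp
    fix \<eta> :: "'a \<Rightarrow> real" and \<eta>' :: "'a \<Rightarrow> 'a" and s :: real and u :: "'a \<Rightarrow> real" and k :: nat and e :: 'a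
    assume e: "e \<in> Basis"
      and d: "\<forall>x. (\<eta> has_derivative (\<lambda>h. \<eta>' x \<bullet> h)) (at x)"
      and "continuous_on UNIV \<eta>'" "\<forall>x\<in>ball 0 1. \<eta> x = 1" "\<forall>x. x \<notin> ball 0 2 \<longrightarrow> \<eta> x = 0"
      and r: "\<forall>x. 0 \<le> \<eta> x \<and> \<eta> x \<le> 1" and b: "\<forall>x. norm (\<eta>' x) \<le> 2"
      and s0: "0 < s" and s1: "s < 1"
      and um[measurable]: "u \<in> borel_measurable lebesgue"
      and "Lp_pow p u < \<infinity>" and k: "1 \<le> k"
    define dd where "dd x h = \<bar>u (x + h *\<^sub>R e) - u x\<bar> powr p / \<bar>h\<bar> powr (1 + s * p)" for x h
    define G where "G h = (min 1 \<bar>h\<bar>) powr p / \<bar>h\<bar> powr (1 + s * p)" for h :: real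
    define IG where "IG = 2 / (p * s * (1 - s))"
    have IG0: "IG > 0" unfolding IG_def using p s0 s1 by simp
    have Gle: "(\<integral>\<^sup>+h. ennreal (G h) \<partial>(lebesgue::real measure)) \<le> ennreal IG"
      unfolding G_def IG_def using G_int[OF s0 s1 p] by simp
    have dd0: "dd x h \<ge> 0" for x h unfolding dd_def by simp
    have G0: "G h \<ge> 0" for h unfolding G_def by simp
    define I where "I x = (\<integral>\<^sup>+h. ennreal (\<bar>\<eta> ((1 / real k) *\<^sub>R (x + h *\<^sub>R e)) * u (x + h *\<^sub>R e) - \<eta> ((1 / real k) *\<^sub>R x) * u x\<bar> powr p
           / \<bar>h\<bar> powr (1 + s * p)) \<partial>(lebesgue::real measure))" for x
    define A where "A x = (\<integral>\<^sup>+h. ennreal (dd x h) \<partial>(lebesgue::real measure))" for x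
    have inner: "I x \<le> ennreal (K * IG * \<bar>u x\<bar> powr p) + ennreal K * A x" for x
    proof -
      have "I x \<le> (\<integral>\<^sup>+h. ennreal (K * \<bar>u x\<bar> powr p * G h) + ennreal K * ennreal (dd x h) \<partial>(lebesgue::real measure))"
        unfolding I_def
      proof (intro nn_integral_mono)
        fix h :: real
        have le: "\<bar>\<eta> ((1 / real k) *\<^sub>R (x + h *\<^sub>R e)) * u (x + h *\<^sub>R e) - \<eta> ((1 / real k) *\<^sub>R x) * u x\<bar> powr p
           / \<bar>h\<bar> powr (1 + s * p) \<le> K * \<bar>u x\<bar> powr p * G h + K * dd x h"
          using pt_main[OF d b r k e p, of x h u s] unfolding K_def G_def dd_def by simp
        show "ennreal (\<bar>\<eta> ((1 / real k) *\<^sub>R (x + h *\<^sub>R e)) * u (x + h *\<^sub>R e) - \<eta> ((1 / real k) *\<^sub>R x) * u x\<bar> powr p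
           / \<bar>h\<bar> powr (1 + s * p)) \<le> ennreal (K * \<bar>u x\<bar> powr p * G h) + ennreal K * ennreal (dd x h)"
        proof -
          have n1: "0 \<le> K * \<bar>u x\<bar> powr p * G h" using K0 G0[of h] by simp
          have n2: "0 \<le> K * dd x h" using K0 dd0[of x h] by simp
          note ennreal_leI[OF le]
          also have "ennreal (K * \<bar>u x\<bar> powr p * G h + K * dd x h) = ennreal (K * \<bar>u x\<bar> powr p * G h) + ennreal (K * dd x h)"
            by (rule ennreal_plus[OF n1 n2])
          also have "ennreal (K * dd x h) = ennreal K * ennreal (dd x h)"
            using K0 dd0[of x h] by (intro ennreal_mult) auto
          finally show ?thesis .
        qed
      qed
      also have "\<dots> \<le> (\<integral>\<^sup>+h. ennreal (K * \<bar>u x\<bar> powr p * G h) \<partial>(lebesgue::real measure))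
           + (\<integral>\<^sup>+h. ennreal K * ennreal (dd x h) \<partial>(lebesgue::real measure))"
        by (rule nn_integral_add_le, rule measurable_completion) (unfold G_def, measurable)
      also have "\<dots> \<le> ennreal (K * \<bar>u x\<bar> powr p) * ennreal IG + ennreal K * A x"
      proof (rule add_mono)
        have "(\<integral>\<^sup>+h. ennreal (K * \<bar>u x\<bar> powr p * G h) \<partial>(lebesgue::real measure))
            = (\<integral>\<^sup>+h. ennreal (K * \<bar>u x\<bar> powr p) * ennreal (G h) \<partial>(lebesgue::real measure))"
          by (intro nn_integral_cong ennreal_mult'' G0)
        also have "\<dots> = ennreal (K * \<bar>u x\<bar> powr p) * (\<integral>\<^sup>+h. ennreal (G h) \<partial>(lebesgue::real measure))"
          by (rule nn_integral_cmult, rule measurable_completion) (unfold G_def, measurable)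
        also have "\<dots> \<le> ennreal (K * \<bar>u x\<bar> powr p) * ennreal IG"
          by (rule mult_left_mono[OF Gle]) simp
        finally show "(\<integral>\<^sup>+h. ennreal (K * \<bar>u x\<bar> powr p * G h) \<partial>(lebesgue::real measure)) \<le> ennreal (K * \<bar>u x\<bar> powr p) * ennreal IG" .
        show "(\<integral>\<^sup>+h. ennreal K * ennreal (dd x h) \<partial>(lebesgue::real measure)) \<le> ennreal K * A x"
          unfolding A_def by (rule nn_integral_cmult_le[OF K0])
      qed
      also have "ennreal (K * \<bar>u x\<bar> powr p) * ennreal IG = ennreal (K * IG * \<bar>u x\<bar> powr p)"
        using K0 IG0 by (simp add: ennreal_mult''[symmetric] mult_ac del: ennreal_mult_eq_top_iff)
      finally show ?thesis .
    qed
    have outer: "(\<integral>\<^sup>+x. I x \<partial>lebesgue) \<le> ennreal (K * IG) * Lp_pow p u + ennreal K * (\<integral>\<^sup>+x. A x \<partial>lebesgue)"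
    proof -
      have "(\<integral>\<^sup>+x. I x \<partial>lebesgue) \<le> (\<integral>\<^sup>+x. ennreal (K * IG * \<bar>u x\<bar> powr p) + ennreal K * A x \<partial>lebesgue)"
        by (intro nn_integral_mono inner)
      also have "\<dots> \<le> (\<integral>\<^sup>+x. ennreal (K * IG * \<bar>u x\<bar> powr p) \<partial>lebesgue) + (\<integral>\<^sup>+x. ennreal K * A x \<partial>lebesgue)"
        by (rule nn_integral_add_le) measurable
      also have "\<dots> \<le> ennreal (K * IG) * Lp_pow p u + ennreal K * (\<integral>\<^sup>+x. A x \<partial>lebesgue)"
      proof (rule add_mono)
        have "(\<integral>\<^sup>+x. ennreal (K * IG * \<bar>u x\<bar> powr p) \<partial>lebesgue) = (\<integral>\<^sup>+x. ennreal (K * IG) * ennreal (\<bar>u x\<bar> powr p) \<partial>lebesgue)"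
          by (intro nn_integral_cong ennreal_mult'') simp
        also have "\<dots> = ennreal (K * IG) * Lp_pow p u"
          unfolding Lp_pow_def by (rule nn_integral_cmult) measurable
        finally show "(\<integral>\<^sup>+x. ennreal (K * IG * \<bar>u x\<bar> powr p) \<partial>lebesgue) \<le> ennreal (K * IG) * Lp_pow p u" by simp
        show "(\<integral>\<^sup>+x. ennreal K * A x \<partial>lebesgue) \<le> ennreal K * (\<integral>\<^sup>+x. A x \<partial>lebesgue)"
          by (rule nn_integral_cmult_le[OF K0])
      qed
      finally show ?thesis .
    qed
    have J1u: "J1 e s p u = ennreal (s * (1 - s)) * (\<integral>\<^sup>+x. A x \<partial>lebesgue)"
      unfolding J1_def A_def dd_def by simp
    have J1k: "J1 e s p (\<lambda>x. \<eta> ((1 / real k) *\<^sub>R x) * u x) = ennreal (s * (1 - s)) * (\<integral>\<^sup>+x. I x \<partial>lebesgue)"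
      unfolding J1_def I_def by simp
    have c0: "s * (1 - s) \<ge> 0" using s0 s1 by simp
    have "J1 e s p (\<lambda>x. \<eta> ((1 / real k) *\<^sub>R x) * u x)
        \<le> ennreal (s * (1 - s)) * (ennreal (K * IG) * Lp_pow p u + ennreal K * (\<integral>\<^sup>+x. A x \<partial>lebesgue))"
      unfolding J1k by (rule mult_left_mono[OF outer]) simp
    also have "\<dots> = ennreal (s * (1 - s) * (K * IG)) * Lp_pow p u + ennreal K * J1 e s p u"
    proof -
      have e1: "ennreal (s * (1 - s)) * ennreal (K * IG) = ennreal (s * (1 - s) * (K * IG))"
        using c0 K0 IG0 by (intro ennreal_mult[symmetric]) auto
      have "ennreal (s * (1 - s)) * (ennreal (K * IG) * Lp_pow p u + ennreal K * (\<integral>\<^sup>+x. A x \<partial>lebesgue))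
          = (ennreal (s * (1 - s)) * ennreal (K * IG)) * Lp_pow p u + ennreal K * (ennreal (s * (1 - s)) * (\<integral>\<^sup>+x. A x \<partial>lebesgue))"
        by (simp add: distrib_left ac_simps)
      then show ?thesis unfolding e1 J1u .
    qed
    also have "s * (1 - s) * (K * IG) = 2 * K / p"
      unfolding IG_def using s0 s1 p by (simp add: field_simps)
    also have "ennreal (2 * K / p) * Lp_pow p u + ennreal K * J1 e s p u \<le> ennreal (2 * K) * Lp_pow p u + ennreal (2 * K) * J1 e s p u"
    proof (intro add_mono mult_right_mono)
      show "ennreal (2 * K / p) \<le> ennreal (2 * K)"
        using K0 p by (intro ennreal_leI) (simp add: divide_le_eq)
      show "ennreal K \<le> ennreal (2 * K)" using K0 by (intro ennreal_leI) simp
    qed auto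
    also have "\<dots> = ennreal (2 * K) * (J1 e s p u + Lp_pow p u)"
      by (simp add: distrib_left add.commute)
    finally show "J1 e s p (\<lambda>x. \<eta> ((1 / real k) *\<^sub>R x) * u x) \<le> ennreal (2 * K) * (J1 e s p u + Lp_pow p u)" .
  qed
qed

end
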